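(* For every dimension $d\ge 2$, Algorithm ExtDrift (defined in the context) is $3$-competitive for the line chasing problem in $\mathbb{R}^d$: for every initial point $P_0\in\mathbb{R}^d$ and every finite sequence of lines $X_1,\dots,X_m$ in $\mathbb{R}^d$, the path $P_0,P_1,\dots,P_m$ produced by ExtDrift satisfies $\sum_{t=1}^m |P_{t-1}P_t| \le 3\cdot\mathrm{OPT}$, where $\mathrm{OPT}=\min\{\sum_{t=1}^m |A_{t-1}A_t| : A_0=P_0,\ A_t\in X_t\}$.
   Context: $|XY|$ denotes Euclidean distance. Line chasing problem: given an initial point $P_0\in\mathbb{R}^d$ and lines $X_1,\dots,X_m$ revealed one at a time, an online algorithm must, upon seeing $X_t$ (and not later lines), choose $P_t\in X_t$; its cost is $\sum_t|P_{t-1}P_t|$. It is $c$-competitive if its cost is at most $c\cdot\mathrm{OPT}$ on every input. Planar Algorithm Drift: given a previous line $L$ in a plane, current point $P\in L$, and new line $L'$ in that plane, for $X\in L$ let $\bar X$ be the orthogonal projection of $X$ onto $L'$. If $L'$ does not meet $L$ in a single point, move to $\bar P$. Otherwise let $S=L\cap L'$, $r=|SP|$, $h=|P\bar P|$, $s=|S\bar P|$, $x=\frac{1}{\sqrt2}(h+s-r)$, and move to the point $P'\in L'$ on the ray from $S$ through $\bar P$ (or $P'=S$ if $\bar P=S$) with $|SP'|=s-x$. Algorithm ExtDrift (in $\mathbb{R}^d$): let $L$ be the previous request line (for the first request, an arbitrary fixed line through $P_0$), $P\in L$ the current position, and $L'$ the new request. If $P\in L'$, stay at $P$. Otherwise let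 $U$ be the unique 2-dimensional plane containing $L'$ and $P$, and make the move prescribed by Drift within $U$ for the current point $P$, new line $L'$, and previous line equal to the orthogonal projection of $L$ onto $U$ (if this projection is the single point $P$, an arbitrary line in $U$ through $P$ is used). *)

theory Defs
  imports "HOL-Analysis.Analysis"
begin

definition is_line :: "'a::euclidean_space set \<Rightarrow> bool" where
  "is_line L \<longleftrightarrow> affine L \<and> aff_dim L = 1"

text \<open>Planar algorithm Drift. M is the previous line, P the current point (on M),
  L' the new line. Orthogonal projection onto L' is the closest point map.
  Returns the new position.\<close>
definition drift :: "'a::euclidean_space set \<Rightarrow> 'a \<Rightarrow> 'a set \<Rightarrow> 'a" where
  "drift M P L' =
    (let Pb = closest_point L' P in
     if \<exists>S. M \<inter> L' = {S} then
       (let S = (THE S. M \<inter> L' = {S});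
            r = dist S P; h = dist P Pb; s = dist S Pb;
            x = (h + s - r) / sqrt 2
        in if Pb = S then S else S + ((s - x) / s) *\<^sub>R (Pb - S))
     else Pb)"

text \<open>The relation allows every admissible
  arbitrary choice of auxiliary line (when the projection of L onto the plane
  degenerates to the point P).\<close>
definition extdrift_step :: "'a::euclidean_space set \<Rightarrow> 'a \<Rightarrow> 'a set \<Rightarrow> 'a \<Rightarrow> bool" where
  "extdrift_step L P L' P' \<longleftrightarrow>
     (P \<in> L' \<and> P' = P) \<or>
     (P \<notin> L' \<and>
       (let U = affine hull (insert P L');
            Lp = closest_point U ` L
        in \<exists>M. (if Lp = {P} then is_line M \<and> M \<subseteq> U \<and> P \<in> M else M = Lp)
               \<and> P' = drift M P L'))"

definition path_cost :: "(nat \<Rightarrow> 'a::euclidean_space) \<Rightarrow> nat \<Rightarrow> real" where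
  "path_cost A m = (\<Sum>t=1..m. dist (A (t - 1)) (A t))"

definition OPT :: "'a::euclidean_space \<Rightarrow> (nat \<Rightarrow> 'a set) \<Rightarrow> nat \<Rightarrow> real" where
  "OPT P0 X m = Inf {path_cost A m | A. A 0 = P0 \<and> (\<forall>t\<in>{1..m}. A t \<in> X t)}"

end

theory Submission
  imports Defs
begin
lemma line_param:
  fixes L :: "'a::euclidean_space set"
  assumes "is_line L" "P \<in> L"
  obtains v where "norm v = 1" "L = range (\<lambda>t. P + t *\<^sub>R v)"
proof -
  have aff: "affine L" and ad: "aff_dim L = 1" using assms by (auto simp: is_line_def)
  have "L \<noteq> {P}" using ad by auto
  then obtain Q where Q: "Q \<in> L" "Q \<noteq> P" using assms(2) by blast
  have sub: "affine hull {P,Q} \<subseteq> L" using Q assms(2) aff by (simp add: hull_minimal)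
  have "affine hull {P,Q} = L"
    by (rule affine_dim_equal) (use sub ad Q aff in auto)
  hence L: "L = range (\<lambda>u. P + u *\<^sub>R (Q - P))" by (simp add: affine_hull_2_alt)
  define n where "n = norm (Q - P)"
  have n: "n > 0" using Q n_def by auto
  define v where "v = (1/n) *\<^sub>R (Q - P)"
  have nv: "norm v = 1" using n by (simp add: v_def n_def)
  have "L = range (\<lambda>t. P + t *\<^sub>R v)"
  proof (intro set_eqI iffI)
    fix x assume "x \<in> L"
    then obtain u where "x = P + u *\<^sub>R (Q - P)" unfolding L by blast
    hence "x = P + (u*n) *\<^sub>R v" using n by (simp add: v_def)
    thus "x \<in> range (\<lambda>t. P + t *\<^sub>R v)" by blast
  next
    fix x assume "x \<in> range (\<lambda>t. P + t *\<^sub>R v)"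
    then obtain t where "x = P + t *\<^sub>R v" by blast
    hence "x = P + (t/n) *\<^sub>R (Q - P)" using n by (simp add: v_def)
    thus "x \<in> L" unfolding L by blast
  qed
  with nv that show ?thesis by blast
qed

lemma sq2: "sqrt 2 * sqrt 2 = (2::real)" by simp
lemma sq3: "sqrt 3 * sqrt 3 = (3::real)" by simp
lemma sq6: "sqrt 6 = sqrt 2 * sqrt (3::real)" by (simp flip: real_sqrt_mult)

lemma scalar_ab:
  fixes h s r x :: real
  assumes h: "h > 0" and s: "s \<ge> 0" and r: "r = sqrt (h^2 + s^2)"
    and x: "x = (h + s - r) / sqrt 2"
  shows "0 \<le> x" "x \<le> s" "s \<le> r"
    "sqrt (h^2 + x^2) + sqrt 3 * x \<le> sqrt 6 * h"
    "sqrt (h^2 + x^2) + sqrt 3 * (s - x) \<le> sqrt 3 * r"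
proof -
  have r0: "r \<ge> 0" using r by simp
  have rr: "r^2 = h^2 + s^2" using r by simp
  have sr: "s \<le> r" unfolding r by (rule real_le_rsqrt) simp
  have hr: "h \<le> r" unfolding r by (rule real_le_rsqrt) simp
  have rhs: "r \<le> h + s"
  proof -
    have "h^2 + s^2 \<le> (h+s)^2" using h s by (simp add: power2_eq_square algebra_simps)
    thus ?thesis unfolding r using h s by (intro real_le_lsqrt) auto
  qed
  have s2: "sqrt 2 > 0" by simp
  have xx: "sqrt 2 * x = h + s - r" using x by simp
  show "0 \<le> x" using xx rhs s2 by (smt (verit) mult_nonneg_nonneg zero_le_mult_iff)
  have "sqrt 2 \<ge> 1" by simp
  hence "1 * s \<le> sqrt 2 * s" using s by (intro mult_right_mono) auto
  hence "h + s - r \<le> sqrt 2 * s" using hr by simp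
  thus "x \<le> s" using xx s2 by (smt (verit) mult_le_cancel_left_pos)
  show "s \<le> r" by (rule sr)
  have x0: "0 \<le> x" using xx rhs s2 by (smt (verit) mult_nonneg_nonneg zero_le_mult_iff)
  have xh: "sqrt 2 * x \<le> h" using xx sr by simp
  hence "(sqrt 2 * x)^2 \<le> h^2" using x0 by (intro power_mono) auto
  hence "2 * x^2 \<le> h^2" by (simp add: power_mult_distrib)
  hence "h^2 + x^2 \<le> (sqrt 6 / 2 * h)^2" by (simp add: power_mult_distrib power_divide)
  hence A: "sqrt (h^2 + x^2) \<le> sqrt 6 / 2 * h" using h by (intro real_le_lsqrt) auto
  have "sqrt 3 * x \<le> sqrt 6 / 2 * h"
  proof -
    have "sqrt 2 * (sqrt 2 * x) \<le> sqrt 2 * h" using xh by (intro mult_left_mono) auto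
    hence "2 * x \<le> sqrt 2 * h" by (simp add: mult.assoc[symmetric])
    hence "sqrt 3 * (2 * x) \<le> sqrt 3 * (sqrt 2 * h)" by (intro mult_left_mono) auto
    hence "2 * (sqrt 3 * x) \<le> sqrt 6 * h" by (simp add: sq6 algebra_simps)
    thus ?thesis by simp
  qed
  with A show "sqrt (h^2 + x^2) + sqrt 3 * x \<le> sqrt 6 * h" by simp
  define u where "u = r - s"
  have u0: "u \<ge> 0" using sr u_def by simp
  have hu: "h = u + sqrt 2 * x" using xx u_def by simp
  have "h^2 + x^2 \<le> (sqrt 3 * (u + x))^2"
  proof -
    define m where "m = u * x"
    have e1: "h^2 + x^2 = u^2 + 2 * (sqrt 2 * m) + 3 * x^2" unfolding hu m_def
      by (simp add: power2_eq_square algebra_simps)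
    have e2: "(sqrt 3 * (u + x))^2 = 3*u^2 + 6*m + 3*x^2" unfolding m_def
      by (simp add: power2_eq_square algebra_simps)
    have "sqrt 2 \<le> 3" by (simp add: real_sqrt_le_iff real_le_lsqrt)
    moreover have "m \<ge> 0" using u0 x0 m_def by simp
    ultimately have e3: "sqrt 2 * m \<le> 3 * m" by (intro mult_right_mono) auto
    have "u^2 \<ge> 0" by simp
    thus ?thesis using e1 e2 e3 by linarith
  qed
  hence "sqrt (h^2 + x^2) \<le> sqrt 3 * (u + x)" using u0 x0 by (simp add: real_le_lsqrt real_sqrt_le_iff)
  thus "sqrt (h^2 + x^2) + sqrt 3 * (s - x) \<le> sqrt 3 * r" unfolding u_def by (simp add: algebra_simps)
qed

lemma scalar_main:
  fixes h s r x l :: real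
  assumes h: "h > 0" and s: "s \<ge> 0" and r: "r = sqrt (h^2 + s^2)"
    and x: "x = (h + s - r) / sqrt 2"
  shows "sqrt (h^2 + x^2) + sqrt 3 * \<bar>l * s - x\<bar> \<le> sqrt 3 * \<bar>l\<bar> * r + sqrt 6 * \<bar>1 - l\<bar> * h"
proof -
  note ab = scalar_ab[OF h s r x]
  define D where "D = sqrt (h^2 + x^2)"
  have a: "D + sqrt 3 * x \<le> sqrt 6 * h" and b: "D + sqrt 3 * (s - x) \<le> sqrt 3 * r"
    using ab D_def by auto
  have x0: "0 \<le> x" and xs: "x \<le> s" and sr: "s \<le> r" using ab by auto
  have s3: "sqrt 3 \<ge> 0" and s6: "sqrt 6 \<ge> 0" by auto
  consider "l < 0" | "0 \<le> l" "l \<le> 1" | "l > 1" by linarith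
  hence "D + sqrt 3 * \<bar>l * s - x\<bar> \<le> sqrt 3 * \<bar>l\<bar> * r + sqrt 6 * \<bar>1 - l\<bar> * h"
  proof cases
    case 1
    have "\<bar>l * s - x\<bar> = x + (-l) * s" proof -
      have "(-l) * s \<ge> 0" using 1 s by (intro mult_nonneg_nonneg) auto
      thus ?thesis using x0 by arith
    qed
    moreover have "(-l) * s \<le> (-l) * r" using 1 sr by (intro mult_left_mono) auto
    moreover have "sqrt 6 * h \<le> sqrt 6 * (\<bar>1 - l\<bar> * h)" using 1 h by (intro mult_left_mono) auto
    ultimately have "\<bar>l * s - x\<bar> \<le> x + ((-l) * r)" by linarith
    hence "sqrt 3 * \<bar>l * s - x\<bar> \<le> sqrt 3 * (x + ((-l) * r))" by (intro mult_left_mono) auto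
    hence "sqrt 3 * \<bar>l * s - x\<bar> \<le> sqrt 3 * x + sqrt 3 * \<bar>l\<bar> * r" using 1 by (simp add: algebra_simps)
    moreover have "\<bar>l\<bar> = -l" using 1 by simp
    ultimately show ?thesis using a \<open>sqrt 6 * h \<le> sqrt 6 * (\<bar>1 - l\<bar> * h)\<close>
      by (simp only: mult.assoc)
  next
    case 2
    have "\<bar>l * s - x\<bar> \<le> l * (s - x) + (1 - l) * x"
    proof -
      have "l * s - x = l * (s - x) - (1 - l) * x" by (simp add: algebra_simps)
      moreover have "l * (s - x) \<ge> 0" "(1 - l) * x \<ge> 0" using 2 xs x0 by auto
      ultimately show ?thesis by linarith
    qed
    hence "sqrt 3 * \<bar>l * s - x\<bar> \<le> l * (sqrt 3 * (s - x)) + (1 - l) * (sqrt 3 * x)"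
      using s3 by (metis mult_left_mono distrib_left mult.left_commute)
    moreover have "D = l * D + (1 - l) * D" by (simp add: algebra_simps)
    moreover have "l * (D + sqrt 3 * (s - x)) \<le> l * (sqrt 3 * r)" using b 2 by (intro mult_left_mono) auto
    moreover have "(1 - l) * (D + sqrt 3 * x) \<le> (1 - l) * (sqrt 6 * h)" using a 2 by (intro mult_left_mono) auto
    moreover have "\<bar>l\<bar> = l" "\<bar>1 - l\<bar> = 1 - l" using 2 by auto
    ultimately show ?thesis by (simp add: algebra_simps)
  next
    case 3
    have "\<bar>l * s - x\<bar> = (s - x) + (l - 1) * s"
    proof -
      have "l * s \<ge> 1 * s" using 3 s by (intro mult_right_mono) auto
      thus ?thesis using xs by (simp add: algebra_simps)
    qed
    moreover have "(l - 1) * s \<le> (l - 1) * r" using 3 sr by (intro mult_left_mono) auto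
    ultimately have "\<bar>l * s - x\<bar> \<le> (s - x) + ((l - 1) * r)" by linarith
    hence "sqrt 3 * \<bar>l * s - x\<bar> \<le> sqrt 3 * ((s - x) + ((l - 1) * r))" by (intro mult_left_mono) auto
    hence "sqrt 3 * \<bar>l * s - x\<bar> \<le> sqrt 3 * (s - x) + sqrt 3 * l * r - sqrt 3 * r" by (simp add: algebra_simps)
    moreover have "\<bar>l\<bar> = l" using 3 by simp
    moreover have "sqrt 6 * \<bar>1 - l\<bar> * h \<ge> 0" using h by simp
    ultimately show ?thesis using b by (simp add: algebra_simps)
  qed
  thus ?thesis by (simp add: D_def)
qed

lemma orth_norm:
  fixes e w :: "'a::real_inner"
  assumes "norm e = 1" "norm w = 1" "inner e w = 0"
  shows "norm (a *\<^sub>R e + b *\<^sub>R w) = sqrt (a^2 + b^2)"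
proof -
  have ee: "inner e e = 1" and ww: "inner w w = 1" using assms by (simp_all add: dot_square_norm)
  have we: "inner w e = 0" using assms by (simp add: inner_commute)
  have "(norm (a *\<^sub>R e + b *\<^sub>R w))^2 = inner (a *\<^sub>R e + b *\<^sub>R w) (a *\<^sub>R e + b *\<^sub>R w)"
    by (simp add: power2_norm_eq_inner)
  also have "\<dots> = a^2 + b^2" using ee ww we assms(3)
    by (simp add: inner_add_left inner_add_right power2_eq_square)
  finally have "(norm (a *\<^sub>R e + b *\<^sub>R w))^2 = a^2 + b^2" .
  thus ?thesis by (metis norm_ge_zero real_sqrt_unique)
qed

lemma cs_ineq:
  fixes a b :: real
  assumes "a \<ge> 0" "b \<ge> 0"
  shows "sqrt 6 * a + sqrt 3 * b \<le> 3 * sqrt (a^2 + b^2)"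
proof -
  have "(sqrt 6 * a + sqrt 3 * b)^2 = 6*a^2 + 3*b^2 + 2 * (sqrt 2 * 3) * a * b"
    by (simp add: power2_eq_square algebra_simps sq6)
  also have "\<dots> = 9 * (a^2 + b^2) - 3 * (a - sqrt 2 * b)^2"
    by (simp add: power2_eq_square algebra_simps)
  also have "\<dots> \<le> 9 * (a^2+b^2)" by simp
  finally have "(sqrt 6 * a + sqrt 3 * b)^2 \<le> (3 * sqrt (a^2 + b^2))^2"
    by (simp add: power_mult_distrib)
  thus ?thesis by (rule power2_le_imp_le) simp
qed

lemma core_single:
  fixes e w Pb P S A' B P' :: "'a::real_inner"
  assumes w: "norm w = 1" and e: "norm e = 1" and ew: "inner e w = 0" and h: "h > 0"
    and P: "P = Pb + h *\<^sub>R e" and S: "S = Pb + \<sigma> *\<^sub>R w" and A': "A' = Pb + \<alpha> *\<^sub>R w"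
    and B: "B = P + l *\<^sub>R (S - P)"
    and P': "P' = (let r = dist S P; hh = dist P Pb; s = dist S Pb; x = (hh + s - r)/sqrt 2
                   in if Pb = S then S else S + ((s - x) / s) *\<^sub>R (Pb - S))"
  shows "dist P P' + sqrt 3 * dist P' A' \<le> sqrt 3 * dist P B + 3 * dist B A'"
proof -
  have we: "inner w e = 0" using ew by (simp add: inner_commute)
  define s where "s = \<bar>\<sigma>\<bar>"
  define r where "r = sqrt (h^2 + s^2)"
  define x where "x = (h + s - r) / sqrt 2"
  have dSP: "dist S P = r"
  proof -
    have "S - P = (-h) *\<^sub>R e + \<sigma> *\<^sub>R w" using S P by (simp add: algebra_simps)
    hence "norm (S - P) = sqrt ((-h)^2 + \<sigma>^2)" using orth_norm[OF e w ew] by metis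
    thus ?thesis by (simp add: dist_norm r_def s_def)
  qed
  have dPPb: "dist P Pb = h" using P h e by (simp add: dist_norm)
  have dSPb: "dist S Pb = s" using S w by (simp add: dist_norm s_def)
  define \<tau> where "\<tau> = (if \<sigma> = 0 then 0 else \<sigma> * x / s)"
  have P'2: "P' = Pb + \<tau> *\<^sub>R w"
  proof (cases "\<sigma> = 0")
    case True
    then show ?thesis using P' S dSP dPPb dSPb by (simp add: \<tau>_def Let_def)
  next
    case False
    hence "Pb \<noteq> S" using S w by auto
    moreover have "s > 0" using False s_def by simp
    ultimately have "P' = S + ((s - x)/s) *\<^sub>R (Pb - S)" using P' dSP dPPb dSPb
      by (simp add: Let_def x_def)
    also have "\<dots> = Pb + (\<sigma> - (s - x)/s * \<sigma>) *\<^sub>R w" using S by (simp add: algebra_simps)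
    also have "\<sigma> - (s - x)/s * \<sigma> = \<sigma> * x / s" using \<open>s > 0\<close> by (simp add: field_simps)
    finally show ?thesis using False by (simp add: \<tau>_def)
  qed
  have x0: "x \<ge> 0" using scalar_ab(1)[OF h _ r_def x_def] s_def by simp
  have tau2: "\<bar>\<tau>\<bar> = x" and taul: "\<bar>\<tau> - l * \<sigma>\<bar> = \<bar>l * s - x\<bar>"
  proof -
    have "\<bar>\<tau>\<bar> = x \<and> \<bar>\<tau> - l * \<sigma>\<bar> = \<bar>l * s - x\<bar>"
    proof (cases "\<sigma> = 0")
      case True
      hence "s = 0" by (simp add: s_def)
      hence "r = h" using h by (simp add: r_def)
      hence "x = 0" using \<open>s = 0\<close> by (simp add: x_def)
      thus ?thesis using True \<open>s = 0\<close> by (simp add: \<tau>_def)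
    next
      case False
      hence s0: "s > 0" by (simp add: s_def)
      have "\<bar>\<tau>\<bar> = \<bar>\<sigma>\<bar> * x / s" using False x0 by (simp add: \<tau>_def abs_mult abs_divide s_def)
      hence 1: "\<bar>\<tau>\<bar> = x" using s0 by (simp add: s_def)
      have "\<tau> - l * \<sigma> = \<sigma> * (x - l * s) / s" using False s0 by (simp add: \<tau>_def field_simps)
      hence "\<bar>\<tau> - l * \<sigma>\<bar> = \<bar>x - l * s\<bar>" using s0 by (simp add: abs_mult abs_divide s_def)
      with 1 show ?thesis by simp
    qed
    thus "\<bar>\<tau>\<bar> = x" "\<bar>\<tau> - l * \<sigma>\<bar> = \<bar>l * s - x\<bar>" by auto
  qed
  have d1: "dist P P' = sqrt (h^2 + x^2)"
  proof -
    have "P - P' = h *\<^sub>R e + (-\<tau>) *\<^sub>R w" using P P'2 by (simp add: algebra_simps)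
    hence "norm (P - P') = sqrt (h^2 + (-\<tau>)^2)" using orth_norm[OF e w ew] by metis
    moreover have "(-\<tau>)^2 = x^2" using tau2 by (metis power2_abs power2_minus)
    ultimately show ?thesis by (simp add: dist_norm)
  qed
  have d2: "dist P' A' = \<bar>\<tau> - \<alpha>\<bar>"
  proof -
    have "P' - A' = (\<tau> - \<alpha>) *\<^sub>R w" using P'2 A' by (simp add: scaleR_diff_left)
    thus ?thesis using w by (simp add: dist_norm)
  qed
  have d3: "dist P B = \<bar>l\<bar> * r"
  proof -
    have "P - B = (- l) *\<^sub>R (S - P)" using B by (simp add: algebra_simps)
    thus ?thesis using dSP by (simp add: dist_norm norm_minus_commute)
  qed
  have d4: "dist B A' = sqrt (((1 - l) * h)^2 + (l * \<sigma> - \<alpha>)^2)"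
  proof -
    have "B - A' = ((1 - l) * h) *\<^sub>R e + (l * \<sigma> - \<alpha>) *\<^sub>R w" using B P S A' by (simp add: algebra_simps)
    thus ?thesis using orth_norm[OF e w ew] by (simp add: dist_norm)
  qed
  have sc: "sqrt (h^2 + x^2) + sqrt 3 * \<bar>l * s - x\<bar> \<le> sqrt 3 * \<bar>l\<bar> * r + sqrt 6 * \<bar>1 - l\<bar> * h"
    by (rule scalar_main[OF h _ r_def x_def]) (simp add: s_def)
  have cs: "sqrt 6 * (\<bar>1 - l\<bar> * h) + sqrt 3 * \<bar>l * \<sigma> - \<alpha>\<bar> \<le> 3 * sqrt (((1 - l) * h)^2 + (l * \<sigma> - \<alpha>)^2)"
    using cs_ineq[of "\<bar>1 - l\<bar> * h" "\<bar>l * \<sigma> - \<alpha>\<bar>"] h by (simp add: power_mult_distrib)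
  have tri: "\<bar>\<tau> - \<alpha>\<bar> \<le> \<bar>\<tau> - l * \<sigma>\<bar> + \<bar>l * \<sigma> - \<alpha>\<bar>" by linarith
  have "sqrt 3 * \<bar>\<tau> - \<alpha>\<bar> \<le> sqrt 3 * \<bar>l * s - x\<bar> + sqrt 3 * \<bar>l * \<sigma> - \<alpha>\<bar>"
    using mult_left_mono[OF tri, of "sqrt 3"] taul by (simp add: distrib_left)
  thus ?thesis using d1 d2 d3 d4 sc cs by (simp add: mult.assoc)
qed

lemma core_par:
  fixes e w Pb P A' B :: "'a::real_inner"
  assumes w: "norm w = 1" and e: "norm e = 1" and ew: "inner e w = 0" and h: "h > 0"
    and P: "P = Pb + h *\<^sub>R e" and A': "A' = Pb + \<alpha> *\<^sub>R w"
    and B: "B = P + \<mu> *\<^sub>R w"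
  shows "dist P Pb + sqrt 3 * dist Pb A' \<le> sqrt 3 * dist P B + 3 * dist B A'"
proof -
  have d1: "dist P Pb = h" using P h e by (simp add: dist_norm)
  have d2: "dist Pb A' = \<bar>\<alpha>\<bar>" using A' w by (simp add: dist_norm)
  have d3: "dist P B = \<bar>\<mu>\<bar>" using B w by (simp add: dist_norm)
  have d4: "dist B A' = sqrt (h^2 + (\<mu> - \<alpha>)^2)"
  proof -
    have "B - A' = h *\<^sub>R e + (\<mu> - \<alpha>) *\<^sub>R w" using B P A' by (simp add: algebra_simps)
    hence "norm (B - A') = sqrt (h^2 + (\<mu> - \<alpha>)^2)" using orth_norm[OF e w ew] by metis
    thus ?thesis by (simp add: dist_norm)
  qed
  have cs: "sqrt 6 * h + sqrt 3 * \<bar>\<mu> - \<alpha>\<bar> \<le> 3 * sqrt (h^2 + (\<mu> - \<alpha>)^2)"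
    using cs_ineq[of h "\<bar>\<mu> - \<alpha>\<bar>"] h by simp
  have "1 * h \<le> sqrt 6 * h" using h by (intro mult_right_mono) auto
  moreover have "\<bar>\<alpha>\<bar> \<le> \<bar>\<mu>\<bar> + \<bar>\<mu> - \<alpha>\<bar>" by linarith
  hence "sqrt 3 * \<bar>\<alpha>\<bar> \<le> sqrt 3 * \<bar>\<mu>\<bar> + sqrt 3 * \<bar>\<mu> - \<alpha>\<bar>"
    using mult_left_mono[of "\<bar>\<alpha>\<bar>" "\<bar>\<mu>\<bar> + \<bar>\<mu> - \<alpha>\<bar>" "sqrt 3"] by (simp add: distrib_left)
  ultimately show ?thesis unfolding d1 d2 d3 d4 using cs by linarith
qed

lemma cp_orth:
  fixes U :: "'a::euclidean_space set"
  assumes q: "q \<in> U" and orth: "\<forall>y\<in>U. inner (a - q) (y - q) = 0"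
  shows "closest_point U a = q"
proof -
  have pyth: "(dist a y)^2 = (dist a q)^2 + (dist q y)^2" if "y \<in> U" for y
  proof -
    have "a - y = (a - q) - (y - q)" by simp
    hence "(norm (a - y))^2 = inner ((a - q) - (y - q)) ((a - q) - (y - q))"
      by (simp add: power2_norm_eq_inner)
    also have "\<dots> = (norm (a - q))^2 + (norm (y - q))^2 - 2 * inner (a - q) (y - q)"
      by (simp add: inner_diff_left inner_diff_right power2_norm_eq_inner inner_commute)
    finally show ?thesis using orth that by (simp add: dist_norm norm_minus_commute)
  qed
  have P: "q \<in> U \<and> (\<forall>y\<in>U. dist a q \<le> dist a y)"
    using q pyth by (simp add: real_le_rsqrt) (metis dist_commute le_add_same_cancel1 zero_le_power2 power2_le_imp_le zero_le_dist)
  show ?thesis unfolding closest_point_def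
  proof (rule someI2[of "\<lambda>x. x \<in> U \<and> (\<forall>y\<in>U. dist a x \<le> dist a y)" q, OF P])
    fix x assume x: "x \<in> U \<and> (\<forall>y\<in>U. dist a x \<le> dist a y)"
    hence "dist a x \<le> dist a q" using q by blast
    moreover have "(dist a x)^2 = (dist a q)^2 + (dist q x)^2" using pyth x by blast
    ultimately have "(dist q x)^2 \<le> 0" by (smt (verit) power_mono zero_le_dist)
    thus "x = q" by simp
  qed
qed

lemma orth_nonexp:
  fixes U :: "'a::euclidean_space set"
  assumes y: "y \<in> U" and orth: "\<forall>y\<in>U. inner (a - q) (y - q) = 0"
  shows "dist q y \<le> dist a y"
proof -
  have "(norm (a - y))^2 = inner ((a - q) - (y - q)) ((a - q) - (y - q))"
    by (simp add: power2_norm_eq_inner)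
  also have "\<dots> = (norm (a - q))^2 + (norm (y - q))^2 - 2 * inner (a - q) (y - q)"
    by (simp add: inner_diff_left inner_diff_right power2_norm_eq_inner inner_commute)
  finally have "(dist a y)^2 = (dist a q)^2 + (dist q y)^2" using orth y by (simp add: dist_norm norm_minus_commute)
  hence "(dist q y)^2 \<le> (dist a y)^2" by simp
  thus ?thesis by (rule power2_le_imp_le) simp
qed

lemma line_nonempty: "is_line L \<Longrightarrow> L \<noteq> {}"
  by (auto simp: is_line_def)

lemma line_proj_setup:
  fixes L' :: "'a::euclidean_space set"
  assumes "is_line L'"
  obtains w where "norm w = 1" "L' = range (\<lambda>s. closest_point L' P + s *\<^sub>R w)"
    "inner (P - closest_point L' P) w = 0"
proof -
  obtain Q where Q: "Q \<in> L'" using line_nonempty[OF assms] by blast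
  obtain w where w: "norm w = 1" and L: "L' = range (\<lambda>s. Q + s *\<^sub>R w)"
    using line_param[OF assms Q] by blast
  have ww: "inner w w = 1" using w by (simp add: dot_square_norm)
  define c where "c = inner (P - Q) w"
  define q where "q = Q + c *\<^sub>R w"
  have qL: "q \<in> L'" unfolding L q_def by blast
  have orthq: "inner (P - q) w = 0" unfolding q_def c_def using ww
    by (simp add: inner_diff_left inner_add_left algebra_simps)
  have "\<forall>y\<in>L'. inner (P - q) (y - q) = 0"
  proof
    fix y assume "y \<in> L'"
    then obtain s where "y = Q + s *\<^sub>R w" unfolding L by blast
    hence "y - q = (s - c) *\<^sub>R w" by (simp add: q_def scaleR_diff_left)
    thus "inner (P - q) (y - q) = 0" using orthq by simp
  qed
  hence cp: "closest_point L' P = q" by (rule cp_orth[OF qL])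
  have "L' = range (\<lambda>s. q + s *\<^sub>R w)"
  proof (intro set_eqI iffI)
    fix y assume "y \<in> L'"
    then obtain s where "y = Q + s *\<^sub>R w" unfolding L by blast
    hence "y = q + (s - c) *\<^sub>R w" by (simp add: q_def scaleR_diff_left)
    thus "y \<in> range (\<lambda>s. q + s *\<^sub>R w)" by blast
  next
    fix y assume "y \<in> range (\<lambda>s. q + s *\<^sub>R w)"
    then obtain s where "y = q + s *\<^sub>R w" by blast
    hence "y = Q + (c + s) *\<^sub>R w" by (simp add: q_def scaleR_add_left)
    thus "y \<in> L'" unfolding L by blast
  qed
  thus ?thesis using that w cp orthq by simp
qed

lemma plane_setup:
  fixes P Pb w :: "'a::euclidean_space"
  assumes w: "norm w = 1" and L': "L' = range (\<lambda>s. Pb + s *\<^sub>R w)"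
    and orth: "inner (P - Pb) w = 0" and PP: "P \<noteq> Pb"
    and h: "h = norm (P - Pb)" and e: "e = (1/h) *\<^sub>R (P - Pb)"
  shows "norm e = 1" "inner e w = 0" "P = Pb + h *\<^sub>R e" "h > 0"
    "affine hull (insert P L') = {Pb + a *\<^sub>R w + b *\<^sub>R e | a b. True}"
    "\<And>y z. z \<in> affine hull (insert P L') \<Longrightarrow>
       inner (y - (Pb + inner (y - Pb) w *\<^sub>R w + inner (y - Pb) e *\<^sub>R e))
             (z - (Pb + inner (y - Pb) w *\<^sub>R w + inner (y - Pb) e *\<^sub>R e)) = 0"
    "\<And>y. closest_point (affine hull (insert P L')) y = Pb + inner (y - Pb) w *\<^sub>R w + inner (y - Pb) e *\<^sub>R e"
proof -
  have h0: "h > 0" using h PP by simp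
  show "h > 0" by (rule h0)
  show ne: "norm e = 1" using h0 h e by simp
  show ew: "inner e w = 0" using e orth by simp
  show Pe: "P = Pb + h *\<^sub>R e" using e h0 by simp
  have ww: "inner w w = 1" using w by (simp add: dot_square_norm)
  have ee: "inner e e = 1" using ne by (simp add: dot_square_norm)
  have we: "inner w e = 0" using ew by (simp add: inner_commute)
  define V where "V = {Pb + a *\<^sub>R w + b *\<^sub>R e | a b. True}"
  have affV: "affine V"
    unfolding affine_def
  proof (intro ballI allI impI)
    fix x y u v assume x: "x \<in> V" and y: "y \<in> V" and uv: "u + v = (1::real)"
    obtain a1 b1 where x: "x = Pb + a1 *\<^sub>R w + b1 *\<^sub>R e" using x V_def by blast
    obtain a2 b2 where y: "y = Pb + a2 *\<^sub>R w + b2 *\<^sub>R e" using y V_def by blast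
    have "u *\<^sub>R x + v *\<^sub>R y = (u + v) *\<^sub>R Pb + (u * a1 + v * a2) *\<^sub>R w + (u * b1 + v * b2) *\<^sub>R e"
      unfolding x y by (simp add: algebra_simps)
    hence "u *\<^sub>R x + v *\<^sub>R y = Pb + (u * a1 + v * a2) *\<^sub>R w + (u * b1 + v * b2) *\<^sub>R e"
      using uv by simp
    thus "u *\<^sub>R x + v *\<^sub>R y \<in> V" unfolding V_def by blast
  qed
  have sub: "insert P L' \<subseteq> V"
  proof
    fix y assume "y \<in> insert P L'"
    then consider "y = P" | s where "y = Pb + s *\<^sub>R w" using L' by blast
    thus "y \<in> V"
    proof cases
      case 1 thus ?thesis unfolding V_def using Pe by (intro CollectI exI[of _ 0] exI[of _ h]) simp
    next
      case 2 thus ?thesis unfolding V_def by (intro CollectI exI[of _ s] exI[of _ 0]) simp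
    qed
  qed
  have "affine hull (insert P L') = V"
  proof
    show "affine hull (insert P L') \<subseteq> V" using sub affV by (rule hull_minimal)
  next
    show "V \<subseteq> affine hull (insert P L')"
    proof
      fix y assume "y \<in> V"
      then obtain a b where y: "y = Pb + a *\<^sub>R w + b *\<^sub>R e" unfolding V_def by blast
      let ?H = "affine hull (insert P L')"
      have aH: "affine ?H" by simp
      have Pb: "Pb \<in> ?H" using L' by (intro hull_inc) (auto intro: range_eqI[of _ _ 0])
      have Pbw: "Pb + w \<in> ?H" using L' by (intro hull_inc) (auto intro: range_eqI[of _ _ 1])
      have PH: "P \<in> ?H" by (intro hull_inc) simp
      have 1: "Pb + a *\<^sub>R ((Pb + w) - Pb) \<in> ?H" by (rule mem_affine_3_minus[OF aH Pb Pbw Pb])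
      have 2: "(Pb + a *\<^sub>R w) + (b/h) *\<^sub>R (P - Pb) \<in> ?H"
        by (rule mem_affine_3_minus[OF aH _ PH Pb]) (use 1 in simp)
      have "(b/h) *\<^sub>R (P - Pb) = b *\<^sub>R e" using e by simp
      thus "y \<in> ?H" using 2 y by simp
    qed
  qed
  thus HV: "affine hull (insert P L') = {Pb + a *\<^sub>R w + b *\<^sub>R e | a b. True}" unfolding V_def .
  show orthU: "\<And>y z. z \<in> affine hull (insert P L') \<Longrightarrow>
       inner (y - (Pb + inner (y - Pb) w *\<^sub>R w + inner (y - Pb) e *\<^sub>R e))
             (z - (Pb + inner (y - Pb) w *\<^sub>R w + inner (y - Pb) e *\<^sub>R e)) = 0"
  proof -
    fix y z assume "z \<in> affine hull (insert P L')"
    then obtain a b where z: "z = Pb + a *\<^sub>R w + b *\<^sub>R e" unfolding HV by blast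
    define d where "d = y - Pb"
    have "y - (Pb + inner (y - Pb) w *\<^sub>R w + inner (y - Pb) e *\<^sub>R e) = d - inner d w *\<^sub>R w - inner d e *\<^sub>R e"
      by (simp add: d_def algebra_simps)
    moreover have "z - (Pb + inner (y - Pb) w *\<^sub>R w + inner (y - Pb) e *\<^sub>R e) = (a - inner d w) *\<^sub>R w + (b - inner d e) *\<^sub>R e"
      by (simp add: z d_def algebra_simps)
    moreover have "inner (d - inner d w *\<^sub>R w - inner d e *\<^sub>R e) w = 0"
      using ww we ew by (simp add: inner_diff_left)
    moreover have "inner (d - inner d w *\<^sub>R w - inner d e *\<^sub>R e) e = 0"
      using ee ew we by (simp add: inner_diff_left)
    ultimately show "inner (y - (Pb + inner (y - Pb) w *\<^sub>R w + inner (y - Pb) e *\<^sub>R e))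
             (z - (Pb + inner (y - Pb) w *\<^sub>R w + inner (y - Pb) e *\<^sub>R e)) = 0"
      by (simp add: inner_add_right)
  qed
  fix y
  show "closest_point (affine hull (insert P L')) y = Pb + inner (y - Pb) w *\<^sub>R w + inner (y - Pb) e *\<^sub>R e"
  proof (rule cp_orth)
    show "Pb + inner (y - Pb) w *\<^sub>R w + inner (y - Pb) e *\<^sub>R e \<in> affine hull (insert P L')"
      unfolding HV by blast
    show "\<forall>z\<in>affine hull (insert P L'). inner (y - (Pb + inner (y - Pb) w *\<^sub>R w + inner (y - Pb) e *\<^sub>R e))
             (z - (Pb + inner (y - Pb) w *\<^sub>R w + inner (y - Pb) e *\<^sub>R e)) = 0"
      using orthU by blast
  qed
qed

lemma drift_single:
  assumes "M \<inter> L' = {S}"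
  shows "drift M P L' = (let Pb = closest_point L' P; r = dist S P; hh = dist P Pb; s = dist S Pb;
                             x = (hh + s - r) / sqrt 2
                         in if Pb = S then S else S + ((s - x) / s) *\<^sub>R (Pb - S))"
proof -
  have "(THE S. M \<inter> L' = {S}) = S" 
    using assms by (metis (mono_tags, lifting) singleton_inject the_equality)
  thus ?thesis unfolding drift_def using assms by (simp add: Let_def)
qed

lemma drift_par:
  assumes "\<not> (\<exists>S. M \<inter> L' = {S})"
  shows "drift M P L' = closest_point L' P"
  unfolding drift_def using assms by (simp add: Let_def)

lemma cp_in_line:
  fixes L' :: "'a::euclidean_space set"
  assumes "is_line L'"
  shows "closest_point L' P \<in> L'"
proof -
  obtain w where "L' = range (\<lambda>s. closest_point L' P + s *\<^sub>R w)"
    using line_proj_setup[OF assms] by blast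
  thus ?thesis by (metis (no_types, lifting) add.right_neutral rangeI scaleR_zero_left)
qed

lemma drift_in:
  fixes L' :: "'a::euclidean_space set"
  assumes "is_line L'"
  shows "drift M P L' \<in> L'"
proof (cases "\<exists>S. M \<inter> L' = {S}")
  case True
  then obtain S where S: "M \<inter> L' = {S}" by blast
  have SL: "S \<in> L'" using S by auto
  have cp: "closest_point L' P \<in> L'" by (rule cp_in_line[OF assms])
  have aff: "affine L'" using assms by (simp add: is_line_def)
  have "S + c *\<^sub>R (closest_point L' P - S) \<in> L'" for c
    by (rule mem_affine_3_minus[OF aff SL cp SL])
  then show ?thesis unfolding drift_single[OF S] using SL by (simp add: Let_def)
next
  case False
  show ?thesis unfolding drift_par[OF False] by (rule cp_in_line[OF assms])
qed

lemma extdrift_in: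
  fixes L' :: "'a::euclidean_space set"
  assumes "is_line L'" "extdrift_step L P L' P'"
  shows "P' \<in> L'"
  using assms drift_in[OF assms(1)] unfolding extdrift_step_def by (auto simp: Let_def)

lemma step_ineq:
  fixes L L' :: "'a::euclidean_space set"
  assumes L: "is_line L" and L': "is_line L'" and PL: "P \<in> L" and AL: "A \<in> L" and A'L: "A' \<in> L'"
    and st: "extdrift_step L P L' P'"
  shows "dist P P' + sqrt 3 * dist P' A' \<le> sqrt 3 * dist P A + 3 * dist A A'"
proof (cases "P \<in> L'")
  case True
  hence P': "P' = P" using st unfolding extdrift_step_def by auto
  have "dist P A' \<le> dist P A + dist A A'" by (rule dist_triangle)
  hence "sqrt 3 * dist P A' \<le> sqrt 3 * dist P A + sqrt 3 * dist A A'"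
    by (metis distrib_left mult_left_mono real_sqrt_ge_zero zero_le_numeral)
  moreover have "sqrt 3 * dist A A' \<le> 3 * dist A A'"
    by (intro mult_right_mono) (auto simp: real_le_lsqrt)
  ultimately show ?thesis using P' by simp
next
  case False
  define Pb where "Pb = closest_point L' P"
  obtain w where w: "norm w = 1" and L'eq: "L' = range (\<lambda>s. Pb + s *\<^sub>R w)"
    and orth: "inner (P - Pb) w = 0"
    using line_proj_setup[OF L', of P] unfolding Pb_def[symmetric] by blast
  have PbL: "Pb \<in> L'" unfolding Pb_def by (rule cp_in_line[OF L'])
  have PP: "P \<noteq> Pb" using False PbL by auto
  define h where "h = norm (P - Pb)"
  define e where "e = (1/h) *\<^sub>R (P - Pb)"
  note ps = plane_setup[OF w L'eq orth PP h_def e_def]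
  have e: "norm e = 1" and ew: "inner e w = 0" and Pe: "P = Pb + h *\<^sub>R e" and h0: "h > 0"
    using ps(1-4) by auto
  have ww: "inner w w = 1" using w by (simp add: dot_square_norm)
  have ee: "inner e e = 1" using e by (simp add: dot_square_norm)
  have we: "inner w e = 0" using ew by (simp add: inner_commute)
  define U where "U = affine hull (insert P L')"
  define proj where "proj y = Pb + inner (y - Pb) w *\<^sub>R w + inner (y - Pb) e *\<^sub>R e" for y
  have cpU: "closest_point U y = proj y" for y unfolding U_def proj_def by (rule ps(7))
  have orthU: "\<forall>z\<in>U. inner (y - proj y) (z - proj y) = 0" for y
    unfolding U_def proj_def using ps(6) by blast
  have PU: "P \<in> U" unfolding U_def by (intro hull_inc) simp
  have A'U: "A' \<in> U" unfolding U_def using A'L by (intro hull_inc) simp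
  define B where "B = proj A"
  have dPB: "dist P B \<le> dist P A"
    using orth_nonexp[OF PU orthU] unfolding B_def by (simp add: dist_commute)
  have dBA': "dist B A' \<le> dist A A'"
    using orth_nonexp[OF A'U orthU] unfolding B_def by simp
  obtain \<alpha> where A': "A' = Pb + \<alpha> *\<^sub>R w" using A'L L'eq by blast
  obtain v where v: "norm v = 1" and Leq: "L = range (\<lambda>t. P + t *\<^sub>R v)" using line_param[OF L PL] by blast
  define p where "p = inner v w *\<^sub>R w + inner v e *\<^sub>R e"
  have projline: "proj (P + t *\<^sub>R v) = P + t *\<^sub>R p" for t
  proof -
    have 1: "inner (P + t *\<^sub>R v - Pb) w = t * inner v w"
      using Pe ew by (simp add: inner_add_left inner_diff_left)
    have 2: "inner (P + t *\<^sub>R v - Pb) e = h + t * inner v e"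
      using Pe ee by (simp add: inner_add_left inner_diff_left)
    show ?thesis unfolding proj_def 1 2 p_def using Pe by (simp add: algebra_simps)
  qed
  have Lp: "closest_point U ` L = range (\<lambda>t. P + t *\<^sub>R p)"
    unfolding Leq cpU image_image projline by simp
  obtain tA where tA: "A = P + tA *\<^sub>R v" using AL Leq by blast
  have BtA: "B = P + tA *\<^sub>R p" unfolding B_def tA projline ..
  obtain M where M: "(if closest_point U ` L = {P} then is_line M \<and> M \<subseteq> U \<and> P \<in> M
                      else M = closest_point U ` L)" and P': "P' = drift M P L'"
    using st False unfolding extdrift_step_def U_def[symmetric] Let_def by auto
  have BLp: "B \<in> closest_point U ` L" unfolding B_def cpU[symmetric] using AL by blast
  have core: "dist P P' + sqrt 3 * dist P' A' \<le> sqrt 3 * dist P B + 3 * dist B A'"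
  proof (cases "\<exists>S. M \<inter> L' = {S}")
    case True
    then obtain S where S: "M \<inter> L' = {S}" by blast
    have SL': "S \<in> L'" and SM: "S \<in> M" using S by auto
    obtain \<sigma> where S\<sigma>: "S = Pb + \<sigma> *\<^sub>R w" using SL' L'eq by blast
    obtain l where Bl: "B = P + l *\<^sub>R (S - P)"
    proof (cases "closest_point U ` L = {P}")
      case True
      hence "B = P" using BLp by blast
      thus ?thesis using that[of 0] by simp
    next
      case False
      hence "M = closest_point U ` L" using M by simp
      then obtain t0 where t0: "S = P + t0 *\<^sub>R p" using SM Lp by blast
      have "S \<noteq> P" using SL' \<open>P \<notin> L'\<close> by auto
      hence "t0 \<noteq> 0" using t0 by auto
      hence "B = P + (tA / t0) *\<^sub>R (S - P)" using t0 BtA by simp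
      thus ?thesis using that by blast
    qed
    have P'f: "P' = (let r = dist S P; hh = dist P Pb; s = dist S Pb; x = (hh + s - r)/sqrt 2
                   in if Pb = S then S else S + ((s - x) / s) *\<^sub>R (Pb - S))"
      unfolding P' drift_single[OF S] Pb_def[symmetric] by (simp add: Let_def)
    show ?thesis by (rule core_single[OF w e ew h0 Pe S\<sigma> A' Bl P'f])
  next
    case False
    note nosingle = False
    have P'f: "P' = Pb" unfolding P' drift_par[OF nosingle] Pb_def ..
    obtain \<mu> where B\<mu>: "B = P + \<mu> *\<^sub>R w"
    proof (cases "closest_point U ` L = {P}")
      case True
      hence "B = P" using BLp by blast
      thus ?thesis using that[of 0] by simp
    next
      case False
      hence MLp: "M = range (\<lambda>t. P + t *\<^sub>R p)" using M Lp by simp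
      have ve: "inner v e = 0"
      proof (rule ccontr)
        assume \<beta>: "inner v e \<noteq> 0"
        define t0 where "t0 = - h / inner v e"
        define S0 where "S0 = P + t0 *\<^sub>R p"
        have ht0: "h + t0 * inner v e = 0" using \<beta> by (simp add: t0_def)
        have gen: "P + t *\<^sub>R p = Pb + (t * inner v w) *\<^sub>R w + (h + t * inner v e) *\<^sub>R e" for t
          unfolding p_def using Pe by (simp add: algebra_simps)
        have "S0 = Pb + (t0 * inner v w) *\<^sub>R w" unfolding S0_def gen ht0 by simp
        hence S0L': "S0 \<in> L'" using L'eq by blast
        have S0M: "S0 \<in> M" unfolding MLp S0_def by blast
        have "M \<inter> L' = {S0}"
        proof
          show "{S0} \<subseteq> M \<inter> L'" using S0L' S0M by blast
          show "M \<inter> L' \<subseteq> {S0}"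
          proof
            fix y assume y: "y \<in> M \<inter> L'"
            then obtain t where yt: "y = P + t *\<^sub>R p" using MLp by blast
            obtain s' where ys: "y = Pb + s' *\<^sub>R w" using y L'eq by blast
            have "inner (y - Pb) e = h + t * inner v e"
              unfolding yt gen using ee we by (simp add: inner_add_left)
            moreover have "inner (y - Pb) e = 0" unfolding ys using we by simp
            ultimately have "t = t0" using \<beta> by (simp add: t0_def field_simps)
            thus "y \<in> {S0}" using yt S0_def by simp
          qed
        qed
        thus False using nosingle by blast
      qed
      have "B = P + (tA * inner v w) *\<^sub>R w" using BtA ve by (simp add: p_def)
      thus ?thesis using that by blast
    qed
    show ?thesis unfolding P'f by (rule core_par[OF w e ew h0 Pe A' B\<mu>])
  qed
  have "sqrt 3 * dist P B \<le> sqrt 3 * dist P A" using dPB by (intro mult_left_mono) auto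
  moreover have "3 * dist B A' \<le> 3 * dist A A'" using dBA' by simp
  ultimately show ?thesis using core by linarith
qed

lemma path_cost_Suc: "path_cost A (Suc n) = path_cost A n + dist (A n) (A (Suc n))"
  unfolding path_cost_def by (simp add: sum.cl_ivl_Suc)

lemma path_cost_0: "path_cost A 0 = 0"
  unfolding path_cost_def by simp

theorem mainTheorem2:
  fixes P0 :: "'a::euclidean_space" and L0 :: "'a set"
    and X :: "nat \<Rightarrow> 'a set" and P :: "nat \<Rightarrow> 'a" and m :: nat
  assumes "DIM('a) \<ge> 2"
    and "is_line L0" and "P0 \<in> L0"
    and "\<forall>t\<in>{1..m}. is_line (X t)"
    and "P 0 = P0"
    and "\<forall>t\<in>{1..m}. extdrift_step (if t = 1 then L0 else X (t - 1)) (P (t - 1)) (X t) (P t)"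
  shows "path_cost P m \<le> 3 * OPT P0 X m"
proof -
  note L0 = assms(2) and P0L0 = assms(3) and Xl = assms(4) and P0 = assms(5) and st = assms(6)
  define Lp where "Lp n = (if n = 0 then L0 else X n)" for n
  have Lpl: "is_line (Lp n)" if "n \<le> m" for n
    using that L0 Xl by (auto simp: Lp_def)
  have PL: "P n \<in> Lp n" if "n \<le> m" for n
  proof (cases n)
    case 0 thus ?thesis using P0 P0L0 by (simp add: Lp_def)
  next
    case (Suc k)
    hence "Suc k \<in> {1..m}" using that by auto
    hence "extdrift_step (if Suc k = 1 then L0 else X (Suc k - 1)) (P (Suc k - 1)) (X (Suc k)) (P (Suc k))"
      using st by blast
    moreover have "is_line (X (Suc k))" using Xl \<open>Suc k \<in> {1..m}\<close> by blast
    ultimately have "P (Suc k) \<in> X (Suc k)" using extdrift_in by blast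
    thus ?thesis using Suc by (simp add: Lp_def)
  qed
  have key: "path_cost P m \<le> 3 * path_cost A m"
    if A0: "A 0 = P0" and AX: "\<forall>t\<in>{1..m}. A t \<in> X t" for A
  proof -
    have AL: "A n \<in> Lp n" if "n \<le> m" for n
      using that A0 P0L0 AX by (cases n) (auto simp: Lp_def)
    have inv: "path_cost P n + sqrt 3 * dist (P n) (A n) \<le> 3 * path_cost A n" if "n \<le> m" for n
      using that
    proof (induction n)
      case 0
      then show ?case using A0 P0 by (simp add: path_cost_0)
    next
      case (Suc n)
      hence nm: "n \<le> m" and Sn: "Suc n \<in> {1..m}" by auto
      have IH: "path_cost P n + sqrt 3 * dist (P n) (A n) \<le> 3 * path_cost A n"
        using Suc.IH nm by blast
      have "extdrift_step (if Suc n = 1 then L0 else X (Suc n - 1)) (P (Suc n - 1)) (X (Suc n)) (P (Suc n))"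
        using st Sn by blast
      hence stn: "extdrift_step (Lp n) (P n) (X (Suc n)) (P (Suc n))"
        by (cases n) (auto simp: Lp_def)
      have "dist (P n) (P (Suc n)) + sqrt 3 * dist (P (Suc n)) (A (Suc n))
            \<le> sqrt 3 * dist (P n) (A n) + 3 * dist (A n) (A (Suc n))"
        by (rule step_ineq[OF Lpl[OF nm] _ PL[OF nm] AL[OF nm] _ stn])
           (use Xl Sn AX in auto)
      thus ?case using IH by (simp add: path_cost_Suc)
    qed
    have "path_cost P m \<le> path_cost P m + sqrt 3 * dist (P m) (A m)" by simp
    also have "\<dots> \<le> 3 * path_cost A m" using inv by simp
    finally show ?thesis .
  qed
  define C where "C = {path_cost A m | A. A 0 = P0 \<and> (\<forall>t\<in>{1..m}. A t \<in> X t)}"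
  have Cne: "C \<noteq> {}"
  proof -
    define A where "A t = (if t = 0 then P0 else (SOME x. x \<in> X t))" for t
    have "\<forall>t\<in>{1..m}. A t \<in> X t"
    proof
      fix t assume t: "t \<in> {1..m}"
      hence "X t \<noteq> {}" using Xl line_nonempty by blast
      thus "A t \<in> X t" using t by (simp add: A_def some_in_eq)
    qed
    moreover have "A 0 = P0" by (simp add: A_def)
    ultimately show ?thesis unfolding C_def by blast
  qed
  have "path_cost P m / 3 \<le> Inf C"
  proof (rule cInf_greatest[OF Cne])
    fix c assume "c \<in> C"
    then obtain A where "c = path_cost A m" "A 0 = P0" "\<forall>t\<in>{1..m}. A t \<in> X t" unfolding C_def by blast
    thus "path_cost P m / 3 \<le> c" using key by fastforce
  qed
  thus ?thesis unfolding OPT_def C_def[symmetric] by simp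
qed

end
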